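(* Fix $L>0$ and define $$\Delta_n(FP-ES;L)=\max_{T\in RB(n)}\max_{i\in[n]}\sup_{l>0:\ \sum_e l(e)=L}\{FP_T(i)-ES_T(i)\},$$ and $\Delta_n(ES-FP;L)$ analogously with $ES_T(i)-FP_T(i)$. The suprema run over strictly positive edge-length assignments with total length $L$. (i) For $n\ge 2$, $\Delta_n(FP-ES;L)=\lambda_n L$, where $\lambda_n=0$ for $n=2,3$, $\lambda_4=\tfrac1{12}$, $\lambda_5=\tfrac18$, and $\lambda_n=\tfrac{11}{80}$ for $n\ge 6$. For $n\ge 3$, $\Delta_n(ES-FP;L)=\left(\tfrac12-\tfrac1{n-1}\right)L$. (ii) If the suprema are restricted to positive edge-length assignments with total length $L$ that also satisfy (MC), then the same formulas hold with $L$ replaced by $L/2$. That is, $\Delta_n(FP-ES;L)=\lambda_n L/2$ for $n\ge2$, and $\Delta_n(ES-FP;L)=\left(\tfrac12-\tfrac1{n-1}\right)L/2$ for $n\ge 3$.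
   Context: $RB(n)$ is the set of rooted binary phylogenetic trees with leaf set $[n]=\{1,\dots,n\}$: rooted trees in which every non-leaf vertex has out-degree exactly 2, leaves labelled bijectively by $[n]$, identified up to label-preserving isomorphism. Each edge has length $l(e)>0$, and $n(e)$ is the number of leaves descended from $e$. $FP_T(i)=\sum_{e\in P(T;\rho,i)} l(e)/n(e)$ and $ES_T(i)=\sum_{e\in P(T;\rho,i)} l(e)/2^{k(e,i)}$, where $P(T;\rho,i)$ is the root-to-$i$ path and $k(e,i)$ is the number of edges strictly between $e$ and $i$ on that path. (MC): all root-to-leaf path lengths are equal. *)

theory Defs
  imports Complex_Main
begin

text \<open>Vertices are addressed by their position: the list of
left/right (False/True) choices on the path from the root. The edges are in bijection
with the non-root vertices (each edge is identified with its lower endpoint).\<close>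

datatype btree = Leaf nat | Node btree btree

fun leaf_list :: "btree \<Rightarrow> nat list" where
  "leaf_list (Leaf a) = [a]"
| "leaf_list (Node t1 t2) = leaf_list t1 @ leaf_list t2"

definition leaves :: "btree \<Rightarrow> nat set" where
  "leaves t = set (leaf_list t)"

text \<open>RB(n): leaves labelled bijectively by {1..n}. Distinct datatype values that are
isomorphic (child swaps) represent the same phylogenetic tree; this does not affect
maxima over RB(n).\<close>
definition RB :: "nat \<Rightarrow> btree set" where
  "RB n = {t. distinct (leaf_list t) \<and> set (leaf_list t) = {1..n}}"

fun positions :: "btree \<Rightarrow> bool list set" where
  "positions (Leaf a) = {[]}"
| "positions (Node t1 t2) = {[]} \<union> Cons False ` positions t1 \<union> Cons True ` positions t2"

fun subtree :: "btree \<Rightarrow> bool list \<Rightarrow> btree" where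
  "subtree t [] = t"
| "subtree (Node t1 t2) (False # p) = subtree t1 p"
| "subtree (Node t1 t2) (True # p) = subtree t2 p"
| "subtree (Leaf a) (_ # p) = Leaf a"

definition edges :: "btree \<Rightarrow> bool list set" where
  "edges t = positions t - {[]}"

definition leafpos :: "btree \<Rightarrow> nat \<Rightarrow> bool list" where
  "leafpos t i = (THE p. p \<in> positions t \<and> subtree t p = Leaf i)"

definition path_edges :: "btree \<Rightarrow> nat \<Rightarrow> bool list set" where
  "path_edges t i = {e \<in> edges t. take (length e) (leafpos t i) = e}"

definition ndesc :: "btree \<Rightarrow> bool list \<Rightarrow> nat" where
  "ndesc t e = card (leaves (subtree t e))"

definition kdist :: "btree \<Rightarrow> bool list \<Rightarrow> nat \<Rightarrow> nat" where
  "kdist t e i = length (leafpos t i) - length e"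

definition FP :: "btree \<Rightarrow> (bool list \<Rightarrow> real) \<Rightarrow> nat \<Rightarrow> real" where
  "FP t l i = (\<Sum>e\<in>path_edges t i. l e / real (ndesc t e))"

definition ES :: "btree \<Rightarrow> (bool list \<Rightarrow> real) \<Rightarrow> nat \<Rightarrow> real" where
  "ES t l i = (\<Sum>e\<in>path_edges t i. l e / 2 ^ kdist t e i)"

definition admissible :: "btree \<Rightarrow> real \<Rightarrow> (bool list \<Rightarrow> real) \<Rightarrow> bool" where
  "admissible t L l \<longleftrightarrow> (\<forall>e\<in>edges t. l e > 0) \<and> (\<Sum>e\<in>edges t. l e) = L"

definition root_leaf_dist :: "btree \<Rightarrow> (bool list \<Rightarrow> real) \<Rightarrow> nat \<Rightarrow> real" where
  "root_leaf_dist t l i = (\<Sum>e\<in>path_edges t i. l e)"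

definition MC :: "btree \<Rightarrow> (bool list \<Rightarrow> real) \<Rightarrow> bool" where
  "MC t l \<longleftrightarrow> (\<forall>i\<in>leaves t. \<forall>j\<in>leaves t. root_leaf_dist t l i = root_leaf_dist t l j)"

text \<open>Delta_n(FP-ES;L) and Delta_n(ES-FP;L): max over trees and leaves of the sup over
admissible lengths = sup of the union of all these values.  The flag mc restricts to
lengths satisfying (MC).\<close>
definition Delta_FP_ES :: "bool \<Rightarrow> nat \<Rightarrow> real \<Rightarrow> real" where
  "Delta_FP_ES mc n L = Sup {FP t l i - ES t l i | t l i.
      t \<in> RB n \<and> i \<in> {1..n} \<and> admissible t L l \<and> (mc \<longrightarrow> MC t l)}"

definition Delta_ES_FP :: "bool \<Rightarrow> nat \<Rightarrow> real \<Rightarrow> real" where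
  "Delta_ES_FP mc n L = Sup {ES t l i - FP t l i | t l i.
      t \<in> RB n \<and> i \<in> {1..n} \<and> admissible t L l \<and> (mc \<longrightarrow> MC t l)}"

definition lambda :: "nat \<Rightarrow> real" where
  "lambda n = (if n \<le> 3 then 0 else if n = 4 then 1/12 else if n = 5 then 1/8 else 11/80)"

end

theory Submission
  imports Defs
begin

fun ht :: "btree \<Rightarrow> nat" where
  "ht (Leaf a) = 0" | "ht (Node a b) = Suc (max (ht a) (ht b))"

fun lp :: "btree \<Rightarrow> nat \<Rightarrow> bool list" where
  "lp (Leaf a) i = []"
| "lp (Node a b) i = (if i \<in> set (leaf_list a) then False # lp a i else True # lp b i)"

lemma Cons_in_image[simp]: "(x # xs \<in> Cons y ` A) \<longleftrightarrow> x = y \<and> xs \<in> A" by auto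

lemma finite_positions[simp]: "finite (positions t)" by (induction t) auto

lemma leaf_list_nonempty[simp]: "leaf_list t \<noteq> []" by (induction t) auto

lemma subtree_Leaf[simp]: "subtree (Leaf a) p = Leaf a" by (cases p) auto

lemma Nil_pos[simp]: "[] \<in> positions t" by (cases t) auto

lemma positions_append:
  "p @ q \<in> positions t \<longleftrightarrow> p \<in> positions t \<and> q \<in> positions (subtree t p)"
proof (induction t arbitrary: p)
  case (Leaf a) then show ?case by (cases p) auto
next
  case (Node a b)
  show ?case
  proof (cases p)
    case Nil then show ?thesis by simp
  next
    case (Cons x r) then show ?thesis using Node.IH by (cases x) auto
  qed
qed

lemma subtree_append: "subtree t (p @ q) = subtree (subtree t p) q"
proof (induction t arbitrary: p)
  case (Leaf a) then show ?case by simp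
next
  case (Node a b) then show ?case
    by (cases p) (auto split: bool.splits, (metis (full_types) subtree.simps)+)
qed

lemma set_subtree: "set (leaf_list (subtree t p)) \<subseteq> set (leaf_list t)"
proof (induction t arbitrary: p)
  case (Leaf a) then show ?case by simp
next
  case (Node a b) then show ?case
    apply (cases p) apply auto
    by (metis (full_types) Un_iff subsetD subtree.simps(2,3))+
qed

lemma distinct_subtree: "distinct (leaf_list t) \<Longrightarrow> distinct (leaf_list (subtree t p))"
proof (induction t arbitrary: p)
  case (Leaf a) then show ?case by simp
next
  case (Node a b) then show ?case
    apply (cases p) apply auto
    by (metis (full_types) subtree.simps(2,3))
qed

lemma lp_pos: "i \<in> set (leaf_list t) \<Longrightarrow> lp t i \<in> positions t \<and> subtree t (lp t i) = Leaf i"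
  by (induction t) auto

lemma pos_leaf_unique:
  "distinct (leaf_list t) \<Longrightarrow> p \<in> positions t \<Longrightarrow> subtree t p = Leaf i \<Longrightarrow> p = lp t i"
proof (induction t arbitrary: p)
  case (Leaf a) then show ?case by simp
next
  case (Node a b)
  show ?case
  proof (cases p)
    case Nil then show ?thesis using Node by simp
  next
    case (Cons x q)
    show ?thesis
    proof (cases x)
      case False
      then have "q \<in> positions a" "subtree a q = Leaf i" using Node Cons by auto
      moreover have "i \<in> set (leaf_list a)" using set_subtree[of a q] calculation by auto
      ultimately show ?thesis using Node Cons False by auto
    next
      case True
      then have "q \<in> positions b" "subtree b q = Leaf i" using Node Cons by auto
      moreover have "i \<in> set (leaf_list b)" using set_subtree[of b q] calculation by auto
      moreover have "i \<notin> set (leaf_list a)" using Node.prems(1) calculation by auto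
      ultimately show ?thesis using Node Cons True by auto
    qed
  qed
qed

lemma leafpos_eq: "distinct (leaf_list t) \<Longrightarrow> i \<in> set (leaf_list t) \<Longrightarrow> leafpos t i = lp t i"
  unfolding leafpos_def by (rule the_equality) (auto simp: lp_pos pos_leaf_unique)

lemma take_pos: "p \<in> positions t \<Longrightarrow> take j p \<in> positions t"
  using positions_append[of "take j p" "drop j p" t] by simp

lemma path_edges_eq:
  assumes "distinct (leaf_list t)" "i \<in> set (leaf_list t)"
  shows "path_edges t i = (\<lambda>j. take j (lp t i)) ` {1..length (lp t i)}"
proof -
  let ?p = "lp t i"
  have pp: "?p \<in> positions t" using lp_pos assms by blast
  show ?thesis
  proof (intro set_eqI iffI)
    fix e assume "e \<in> path_edges t i"
    then have e: "e \<in> positions t" "e \<noteq> []" "take (length e) ?p = e"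
      by (auto simp: path_edges_def edges_def leafpos_eq assms)
    have "length (take (length e) ?p) = length e" using e(3) by simp
    then have "length e \<le> length ?p" by simp
    then show "e \<in> (\<lambda>j. take j ?p) ` {1..length ?p}" using e
      by (intro image_eqI[of _ _ "length e"]) (auto simp: Suc_le_eq)
  next
    fix e assume "e \<in> (\<lambda>j. take j ?p) ` {1..length ?p}"
    then obtain j where j: "1 \<le> j" "j \<le> length ?p" "e = take j ?p" by auto
    then show "e \<in> path_edges t i" using take_pos[OF pp]
      by (auto simp: path_edges_def edges_def leafpos_eq assms min_def)
  qed
qed

lemma len_pos_lt: "q \<in> positions s \<Longrightarrow> length q < length (leaf_list s)"
proof (induction s arbitrary: q)
  case (Leaf a) then show ?case by simp
next
  case (Node a b)
  have "length (leaf_list a) > 0" "length (leaf_list b) > 0" by auto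
  show ?case
  proof (cases q)
    case Nil then show ?thesis by simp
  next
    case (Cons x r)
    show ?thesis
    proof (cases x)
      case True
      then have "length r < length (leaf_list b)" using Node Cons by auto
      moreover have "length (leaf_list (Node a b)) = length (leaf_list a) + length (leaf_list b)" by simp
      moreover have "length q = Suc (length r)" using Cons by simp
      ultimately show ?thesis using \<open>length (leaf_list a) > 0\<close> by linarith
    next
      case False
      then have "length r < length (leaf_list a)" using Node Cons by auto
      moreover have "length (leaf_list (Node a b)) = length (leaf_list a) + length (leaf_list b)" by simp
      moreover have "length q = Suc (length r)" using Cons by simp
      ultimately show ?thesis using \<open>length (leaf_list b) > 0\<close> by linarith
    qed
  qed
qed

lemma len_subtree_le: "length (leaf_list (subtree t p)) \<le> length (leaf_list t)"
proof (induction t arbitrary: p)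
  case (Leaf a) then show ?case by simp
next
  case (Node a b) then show ?case
    apply (cases p) apply auto
    by (metis (full_types) subtree.simps(2,3) trans_le_add1 trans_le_add2)
qed

lemma len_subtree_lt: "p \<noteq> [] \<Longrightarrow> p \<in> positions t \<Longrightarrow> length (leaf_list (subtree t p)) < length (leaf_list t)"
proof (cases t)
  case (Leaf a)
  assume "p \<noteq> []" "p \<in> positions t" then show ?thesis using Leaf by simp
next
  case (Node a b)
  assume "p \<noteq> []" "p \<in> positions t"
  then obtain x q where "p = x # q" by (cases p) auto
  have "length (leaf_list a) > 0" "length (leaf_list b) > 0" by auto
  have A: "length (leaf_list (subtree a q)) \<le> length (leaf_list a)" "length (leaf_list (subtree b q)) \<le> length (leaf_list b)"
    using len_subtree_le by auto
  show ?thesis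
  proof (cases x)
    case True
    have "length (leaf_list (subtree b q)) < length (leaf_list a) + length (leaf_list b)"
      using A(2) \<open>length (leaf_list a) > 0\<close> by linarith
    then show ?thesis using Node \<open>p = x # q\<close> True by simp
  next
    case False
    have "length (leaf_list (subtree a q)) < length (leaf_list a) + length (leaf_list b)"
      using A(1) \<open>length (leaf_list b) > 0\<close> by linarith
    then show ?thesis using Node \<open>p = x # q\<close> False by simp
  qed
qed


lemma RB_len: "t \<in> RB n \<Longrightarrow> length (leaf_list t) = n"
  unfolding RB_def using distinct_card by fastforce

lemma RB_distinct: "t \<in> RB n \<Longrightarrow> distinct (leaf_list t)"
  unfolding RB_def by auto

lemma RB_leaf: "t \<in> RB n \<Longrightarrow> i \<in> {1..n} \<Longrightarrow> i \<in> set (leaf_list t)"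
  unfolding RB_def by auto

lemma ndesc_len: "distinct (leaf_list t) \<Longrightarrow> ndesc t e = length (leaf_list (subtree t e))"
  unfolding ndesc_def leaves_def by (simp add: distinct_card distinct_subtree)

lemma path_coeff:
  assumes d: "distinct (leaf_list t)" and i: "i \<in> set (leaf_list t)" and e: "e \<in> path_edges t i"
  shows "kdist t e i + 1 \<le> ndesc t e" "ndesc t e < length (leaf_list t)"
    "kdist t e i = 0 \<Longrightarrow> ndesc t e = 1"
proof -
  let ?p = "lp t i"
  have pp: "?p \<in> positions t" "subtree t ?p = Leaf i" using lp_pos i by auto
  obtain j where j: "1 \<le> j" "j \<le> length ?p" "e = take j ?p"
    using e path_edges_eq[OF d i] by auto
  have k: "kdist t e i = length ?p - j"
    unfolding kdist_def using j leafpos_eq[OF d i] by simp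
  have "take j ?p @ drop j ?p \<in> positions t" using pp by simp
  then have dp: "drop j ?p \<in> positions (subtree t e)" "e \<in> positions t"
    unfolding positions_append using j by auto
  show "kdist t e i + 1 \<le> ndesc t e"
    using len_pos_lt[OF dp(1)] k ndesc_len[OF d] by simp
  have "e \<noteq> []" using j by (cases ?p) auto
  then show "ndesc t e < length (leaf_list t)"
    using len_subtree_lt[OF _ dp(2)] ndesc_len[OF d] by simp
  assume "kdist t e i = 0"
  then have "j = length ?p" using k j by simp
  then have "e = ?p" using j by simp
  then show "ndesc t e = 1" using pp ndesc_len[OF d] by simp
qed

lemma path_hd:
  assumes d: "distinct (leaf_list t)" and i: "i \<in> set (leaf_list t)" and e: "e \<in> path_edges t i"
  shows "e \<noteq> [] \<and> hd e = hd (lp t i)"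
proof -
  obtain j where j: "1 \<le> j" "j \<le> length (lp t i)" "e = take j (lp t i)"
    using e path_edges_eq[OF d i] by auto
  then show ?thesis by (cases "lp t i") auto
qed

lemma path_sub_edges: "path_edges t i \<subseteq> edges t"
  unfolding path_edges_def by auto

lemma finite_edges[simp]: "finite (edges t)"
  unfolding edges_def by simp

lemma finite_path[simp]: "finite (path_edges t i)"
  using finite_subset[OF path_sub_edges] by simp

lemma dist_le_L:
  assumes "admissible t L l"
  shows "root_leaf_dist t l i \<le> L"
proof -
  have "root_leaf_dist t l i \<le> (\<Sum>e\<in>edges t. l e)"
    unfolding root_leaf_dist_def
    using assms path_sub_edges unfolding admissible_def
    by (intro sum_mono2) (auto intro: less_imp_le)
  then show ?thesis using assms unfolding admissible_def by simp
qed

lemma dist_le_L2: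
  assumes t: "t \<in> RB n" and n: "2 \<le> n" and i: "i \<in> {1..n}" and adm: "admissible t L l" and mc: "MC t l"
  shows "root_leaf_dist t l i \<le> L / 2"
proof -
  have d: "distinct (leaf_list t)" using RB_distinct t .
  have ii: "i \<in> set (leaf_list t)" using RB_leaf t i .
  obtain a b where tab: "t = Node a b"
    using RB_len[OF t] n by (cases t) auto
  obtain j where jj: "j \<in> set (leaf_list t)" and hj: "hd (lp t j) \<noteq> hd (lp t i)"
  proof (cases "i \<in> set (leaf_list a)")
    case True
    let ?j = "hd (leaf_list b)"
    have "?j \<in> set (leaf_list b)" by simp
    moreover have "?j \<notin> set (leaf_list a)" using d tab calculation by auto
    ultimately show ?thesis using that[of ?j] True tab by auto
  next
    case False
    let ?j = "hd (leaf_list a)"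
    have "?j \<in> set (leaf_list a)" by simp
    then show ?thesis using that[of ?j] False tab by auto
  qed
  have disj: "path_edges t i \<inter> path_edges t j = {}"
    using path_hd[OF d ii] path_hd[OF d jj] hj by blast
  have "root_leaf_dist t l i + root_leaf_dist t l j = (\<Sum>e\<in>path_edges t i \<union> path_edges t j. l e)"
    unfolding root_leaf_dist_def by (simp add: sum.union_disjoint disj)
  also have "\<dots> \<le> (\<Sum>e\<in>edges t. l e)"
    using adm path_sub_edges unfolding admissible_def
    by (intro sum_mono2) (auto intro: less_imp_le)
  also have "\<dots> = L" using adm unfolding admissible_def by simp
  finally have "root_leaf_dist t l i + root_leaf_dist t l j \<le> L" .
  moreover have "root_leaf_dist t l i = root_leaf_dist t l j"
    using mc ii jj unfolding MC_def leaves_def by blast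
  ultimately show ?thesis by simp
qed

lemma dist_bound:
  assumes "t \<in> RB n" "2 \<le> n" "i \<in> {1..n}" "admissible t L l" "mc \<longrightarrow> MC t l"
  shows "root_leaf_dist t l i \<le> (if mc then L / 2 else L)"
  using assms dist_le_L dist_le_L2 by auto

lemma value_bound:
  assumes adm: "admissible t L l" and c: "\<And>e. e \<in> path_edges t i \<Longrightarrow> c e \<le> C"
  shows "(\<Sum>e\<in>path_edges t i. l e * c e) \<le> C * root_leaf_dist t l i"
proof -
  have "(\<Sum>e\<in>path_edges t i. l e * c e) \<le> (\<Sum>e\<in>path_edges t i. l e * C)"
  proof (rule sum_mono)
    fix e assume e: "e \<in> path_edges t i"
    then have "l e > 0" using adm path_sub_edges unfolding admissible_def by auto
    then show "l e * c e \<le> l e * C" using c[OF e] by (simp add: mult_left_mono)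
  qed
  moreover have "(\<Sum>e\<in>path_edges t i. l e * C) = C * root_leaf_dist t l i"
    unfolding root_leaf_dist_def by (simp add: sum_distrib_left mult.commute)
  ultimately show ?thesis by simp
qed

lemma FP_ES_eq: "FP t l i - ES t l i = (\<Sum>e\<in>path_edges t i. l e * (1 / real (ndesc t e) - 1 / 2 ^ kdist t e i))"
  unfolding FP_def ES_def by (simp add: sum_subtractf[symmetric] right_diff_distrib)

lemma ES_FP_eq: "ES t l i - FP t l i = (\<Sum>e\<in>path_edges t i. l e * (1 / 2 ^ kdist t e i - 1 / real (ndesc t e)))"
  unfolding FP_def ES_def by (simp add: sum_subtractf[symmetric] right_diff_distrib)

lemma coeff_FP:
  fixes k m n :: nat
  assumes "k + 1 \<le> m" "m \<le> n - 1"
  shows "1 / real m - 1 / 2 ^ k \<le> lambda n"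
proof -
  have "(2::real) ^ k \<le> 2 ^ (m - 1)" using assms by (intro power_increasing) auto
  then have "1 / real m - 1 / 2 ^ k \<le> 1 / real m - 1 / 2 ^ (m - 1)"
    by (simp add: frac_le)
  also have "\<dots> \<le> lambda n"
  proof -
    consider "m = 1" | "m = 2" | "m = 3" | "m = 4" | "m = 5" | "m = 6" | "m = 7" | "m \<ge> 8"
      using assms by linarith
    then show ?thesis
    proof cases
      case 8
      have "1 / real m \<le> 1 / 8" using 8 by (simp add: frac_le)
      moreover have "(0::real) < 1 / 2 ^ (m - 1)" by simp
      moreover have "lambda n = 11/80" using 8 assms unfolding lambda_def by auto
      ultimately show ?thesis by linarith
    qed (use assms in \<open>auto simp: lambda_def\<close>)
  qed
  finally show ?thesis .
qed

lemma coeff_ES: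
  fixes k m n :: nat
  assumes "k + 1 \<le> m" "m \<le> n - 1" "k = 0 \<Longrightarrow> m = 1" "3 \<le> n"
  shows "1 / 2 ^ k - 1 / real m \<le> 1/2 - 1 / real (n - 1)"
proof (cases "k = 0")
  case True
  then have "m = 1" using assms by auto
  moreover have "1 / real (n - 1) \<le> 1/2" using assms by (simp add: frac_le)
  ultimately show ?thesis using True by simp
next
  case False
  have "(2::real) ^ 1 \<le> 2 ^ k" using False by (intro power_increasing) auto
  then have "1 / (2::real) ^ k \<le> 1 / 2" by (simp add: frac_le)
  moreover have "1 / real (n - 1) \<le> 1 / real m" using assms by (simp add: frac_le)
  ultimately show ?thesis by (smt (verit))
qed


lemma small_delta:
  fixes A1 A2 B1 B2 :: real
  assumes "B1 > 0" "B2 > 0"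
  shows "\<exists>\<delta>>0. \<delta> * A1 < B1 \<and> \<delta> * A2 < B2"
proof -
  define \<delta> where "\<delta> = min (B1 / (\<bar>A1\<bar> + 1)) (B2 / (\<bar>A2\<bar> + 1))"
  have pos: "\<delta> > 0" using assms by (simp add: \<delta>_def)
  have "\<delta> * A1 \<le> \<delta> * \<bar>A1\<bar>" using pos by (simp add: mult_left_mono)
  also have "\<dots> \<le> B1 / (\<bar>A1\<bar> + 1) * \<bar>A1\<bar>" by (intro mult_right_mono) (auto simp: \<delta>_def)
  also have "\<dots> < B1" using assms by (simp add: field_simps)
  finally have 1: "\<delta> * A1 < B1" .
  have "\<delta> * A2 \<le> \<delta> * \<bar>A2\<bar>" using pos by (simp add: mult_left_mono)
  also have "\<dots> \<le> B2 / (\<bar>A2\<bar> + 1) * \<bar>A2\<bar>" by (intro mult_right_mono) (auto simp: \<delta>_def)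
  also have "\<dots> < B2" using assms by (simp add: field_simps)
  finally have 2: "\<delta> * A2 < B2" .
  show ?thesis using pos 1 2 by blast
qed

lemma constr_nonmc:
  fixes E P :: "'a set" and c :: "'a \<Rightarrow> real"
  assumes fin: "finite E" and PE: "P \<subseteq> E" and e0: "e0 \<in> P" and L: "L > 0" and y: "y < c e0 * L"
  shows "\<exists>l. (\<forall>e\<in>E. l e > 0) \<and> (\<Sum>e\<in>E. l e) = L \<and> y < (\<Sum>e\<in>P. l e * c e)"
proof -
  define M where "M = real (card (E - {e0}))"
  define K where "K = (\<Sum>e\<in>P - {e0}. c e)"
  obtain \<delta> where d: "\<delta> > 0" "\<delta> * M < L" "\<delta> * (c e0 * M - K) < c e0 * L - y"
    using small_delta[of L "c e0 * L - y" M "c e0 * M - K"] L y by auto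
  define l where "l = (\<lambda>e. if e = e0 then L - \<delta> * M else \<delta>)"
  have finP: "finite P" using finite_subset[OF PE fin] .
  have e0E: "e0 \<in> E" using e0 PE by auto
  have "(\<Sum>e\<in>E. l e) = l e0 + (\<Sum>e\<in>E - {e0}. l e)" using fin e0E by (simp add: sum.remove)
  also have "(\<Sum>e\<in>E - {e0}. l e) = (\<Sum>e\<in>E - {e0}. \<delta>)" by (intro sum.cong) (auto simp: l_def)
  finally have s: "(\<Sum>e\<in>E. l e) = L" by (simp add: l_def M_def)
  have "(\<Sum>e\<in>P. l e * c e) = l e0 * c e0 + (\<Sum>e\<in>P - {e0}. l e * c e)" using finP e0 by (simp add: sum.remove)
  also have "(\<Sum>e\<in>P - {e0}. l e * c e) = \<delta> * K" unfolding K_def sum_distrib_left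
    by (intro sum.cong) (auto simp: l_def)
  finally have v: "(\<Sum>e\<in>P. l e * c e) = c e0 * L + \<delta> * K - \<delta> * (c e0 * M)" by (simp add: l_def algebra_simps)
  have "y < (\<Sum>e\<in>P. l e * c e)" using v d(3) by (simp add: algebra_simps)
  moreover have "\<forall>e\<in>E. l e > 0" using d by (auto simp: l_def)
  ultimately show ?thesis using s by blast
qed

lemma tele: fixes d :: nat shows "(\<Sum>k\<in>{1..d}. g (k - 1) - g k) = g 0 - (g d :: real)"
  by (induction d) (auto simp: atLeastAtMostSuc_conv)

lemma ht_subtree_le: "ht (subtree t p) \<le> ht t"
proof (induction t arbitrary: p)
  case (Leaf a) then show ?case by simp
next
  case (Node a b) then show ?case
    apply (cases p) apply simp
    by (metis (full_types) le_SucI max.coboundedI1 max.coboundedI2 ht.simps(2) subtree.simps(2,3))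
qed

lemma ht_child_lt: "p @ [x] \<in> positions t \<Longrightarrow> ht (subtree t (p @ [x])) < ht (subtree t p)"
proof -
  assume "p @ [x] \<in> positions t"
  then have "[x] \<in> positions (subtree t p)" using positions_append by blast
  then show ?thesis unfolding subtree_append
    by (cases "subtree t p"; cases x) auto
qed

lemma constr_mc:
  fixes c :: "bool list \<Rightarrow> real"
  assumes t: "t \<in> RB n" and n: "2 \<le> n" and i: "i \<in> {1..n}" and L: "L > 0"
    and y: "y < c (take 1 (lp t i)) * L / 2"
  shows "\<exists>l. admissible t L l \<and> MC t l \<and> y < (\<Sum>e\<in>path_edges t i. l e * c e)"
proof -
  have d: "distinct (leaf_list t)" using RB_distinct t .
  have ii: "i \<in> set (leaf_list t)" using RB_leaf t i .
  obtain a b where tab: "t = Node a b"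
    using RB_len[OF t] n by (cases t) auto
  let ?E = "edges t" and ?P = "path_edges t i" and ?c0 = "c (take 1 (lp t i))"
  define w where "w = (\<lambda>q. (if length q = 1 then 0 else real (ht (subtree t (butlast q)))) - real (ht (subtree t q)))"
  define W where "W = (\<Sum>q\<in>?E. w q)"
  define K where "K = (\<Sum>q\<in>?P. w q * c q)"
  obtain \<delta> where dl: "\<delta> > 0" "\<delta> * (W + 2 * real (ht t)) < L" "\<delta> * (?c0 * W / 2 - K) < ?c0 * L / 2 - y"
    using small_delta[of L "?c0 * L / 2 - y" "W + 2 * real (ht t)" "?c0 * W / 2 - K"] L y by auto
  define H where "H = (L - \<delta> * W) / 2"
  define h where "h = (\<lambda>q. if q = [] then H else \<delta> * real (ht (subtree t q)))"
  define l where "l = (\<lambda>q. h (butlast q) - h q)"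
  have lw: "l q = (if length q = 1 then H else 0) + \<delta> * w q" if "q \<noteq> []" for q
  proof (cases "length q = 1")
    case True
    then have "butlast q = []" by (cases q) auto
    then show ?thesis using True that by (simp add: l_def h_def w_def)
  next
    case False
    then have "butlast q \<noteq> []" using that by (cases q) auto
    then show ?thesis using False that by (simp add: l_def h_def w_def algebra_simps)
  qed
  have E1: "{q \<in> ?E. length q = 1} = {[False], [True]}"
  proof (intro set_eqI iffI)
    fix q assume "q \<in> {q \<in> ?E. length q = 1}"
    then obtain x where "q = [x]" by (cases q) auto
    then show "q \<in> {[False], [True]}" by (cases x) auto
  qed (auto simp: edges_def tab)
  have "(\<Sum>q\<in>?E. l q) = (\<Sum>q\<in>?E. (if length q = 1 then H else 0) + \<delta> * w q)"
    by (intro sum.cong) (auto simp: edges_def lw)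
  also have "\<dots> = (\<Sum>q\<in>?E. (if length q = 1 then H else 0)) + \<delta> * W"
    by (simp add: sum.distrib W_def sum_distrib_left)
  also have "(\<Sum>q\<in>?E. (if length q = 1 then H else 0)) = (\<Sum>q\<in>{q \<in> ?E. length q = 1}. H)"
    by (simp only: sum.inter_filter[OF finite_edges])
  also have "\<dots> = 2 * H" using E1 by simp
  finally have sumE: "(\<Sum>q\<in>?E. l q) = L" by (simp add: H_def field_simps)
  have pne: "lp t i \<noteq> []" using tab by simp
  have P1: "{q \<in> ?P. length q = 1} = {take 1 (lp t i)}"
  proof (intro set_eqI iffI)
    fix q assume "q \<in> {q \<in> ?P. length q = 1}"
    then obtain j where j: "1 \<le> j" "j \<le> length (lp t i)" "q = take j (lp t i)" "length q = 1"
      by (auto simp: path_edges_eq[OF d ii])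
    then have "j = 1" by simp
    then show "q \<in> {take 1 (lp t i)}" using j by simp
  next
    fix q assume q: "q \<in> {take 1 (lp t i)}"
    have "1 \<le> length (lp t i)" using pne by (cases "lp t i") auto
    then have "take 1 (lp t i) \<in> ?P" unfolding path_edges_eq[OF d ii] by auto
    moreover have "length (take 1 (lp t i)) = 1" using pne by (cases "lp t i") auto
    ultimately show "q \<in> {q \<in> ?P. length q = 1}" using q by simp
  qed
  have "(\<Sum>q\<in>?P. l q * c q) = (\<Sum>q\<in>?P. (if length q = 1 then H * c q else 0) + \<delta> * (w q * c q))"
    by (intro sum.cong) (auto simp: lw algebra_simps dest: path_hd[OF d ii])
  also have "\<dots> = (\<Sum>q\<in>?P. (if length q = 1 then H * c q else 0)) + \<delta> * K"
    by (simp add: sum.distrib K_def sum_distrib_left)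
  also have "(\<Sum>q\<in>?P. (if length q = 1 then H * c q else 0)) = (\<Sum>q\<in>{q \<in> ?P. length q = 1}. H * c q)"
    by (simp only: sum.inter_filter[OF finite_path])
  also have "\<dots> = H * ?c0" using P1 by simp
  finally have val: "(\<Sum>q\<in>?P. l q * c q) = H * ?c0 + \<delta> * K" .
  have "y < (\<Sum>q\<in>?P. l q * c q)" using val dl(3) by (simp add: H_def field_simps)
  moreover have pos: "\<forall>q\<in>?E. l q > 0"
  proof
    fix q assume q: "q \<in> ?E"
    then have qne: "q \<noteq> []" and qp: "q \<in> positions t" by (auto simp: edges_def)
    show "l q > 0"
    proof (cases "length q = 1")
      case True
      then have "butlast q = []" by (cases q) auto
      then have "l q = H - \<delta> * real (ht (subtree t q))" using qne by (simp add: l_def h_def)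
      moreover have "\<delta> * real (ht (subtree t q)) \<le> \<delta> * real (ht t)"
        using dl(1) ht_subtree_le by (simp add: mult_left_mono)
      ultimately show ?thesis using dl(2) by (simp add: H_def algebra_simps)
    next
      case False
      then have bne: "butlast q \<noteq> []" using qne by (cases q) auto
      have "butlast q @ [last q] = q" using qne by simp
      then have "ht (subtree t q) < ht (subtree t (butlast q))"
        using ht_child_lt[of "butlast q" "last q" t] qp by simp
      then show ?thesis using bne qne dl(1) by (simp add: l_def h_def)
    qed
  qed
  moreover have "MC t l"
    unfolding MC_def
  proof (intro ballI)
    have dist: "root_leaf_dist t l j = H" if j: "j \<in> leaves t" for j
    proof -
      have jj: "j \<in> set (leaf_list t)" using j by (simp add: leaves_def)
      let ?p = "lp t j"
      have pj: "subtree t ?p = Leaf j" using lp_pos jj by auto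
      have pjne: "?p \<noteq> []" using tab by simp
      have inj: "inj_on (\<lambda>k. take k ?p) {1..length ?p}"
        by (rule inj_onI) (metis atLeastAtMost_iff length_take min.absorb2)
      have "root_leaf_dist t l j = (\<Sum>k\<in>{1..length ?p}. l (take k ?p))"
        unfolding root_leaf_dist_def path_edges_eq[OF d jj] by (simp only: sum.reindex[OF inj] comp_def)
      also have "\<dots> = (\<Sum>k\<in>{1..length ?p}. h (take (k - 1) ?p) - h (take k ?p))"
        by (intro sum.cong) (auto simp: l_def butlast_take)
      also have "\<dots> = h (take 0 ?p) - h (take (length ?p) ?p)" by (rule tele)
      also have "\<dots> = H" using pj pjne by (simp add: h_def)
      finally show ?thesis .
    qed
    fix i j assume "i \<in> leaves t" "j \<in> leaves t"
    then show "root_leaf_dist t l i = root_leaf_dist t l j" using dist by simp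
  qed
  ultimately show ?thesis using sumE unfolding admissible_def by blast
qed


lemma sup_char:
  fixes X :: "real set"
  assumes up: "\<And>x. x \<in> X \<Longrightarrow> x \<le> a" and approx: "\<And>y. y < a \<Longrightarrow> \<exists>x\<in>X. y < x"
  shows "Sup X = a"
proof (rule cSup_eq)
  fix y assume ub: "\<And>x. x \<in> X \<Longrightarrow> x \<le> y"
  show "a \<le> y"
  proof (rule ccontr)
    assume "\<not> a \<le> y"
    then obtain x where "x \<in> X" "y < x" using approx by force
    then show False using ub by force
  qed
qed (use up in auto)

fun catr :: "nat list \<Rightarrow> btree" where
  "catr [] = Leaf 0" | "catr [a] = Leaf a" | "catr (a # b # r) = Node (Leaf a) (catr (b # r))"

lemma ll_catr: "xs \<noteq> [] \<Longrightarrow> leaf_list (catr xs) = xs"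
  by (induction xs rule: catr.induct) auto

lemma lp_catr_last: "distinct xs \<Longrightarrow> xs \<noteq> [] \<Longrightarrow> lp (catr xs) (last xs) = replicate (length xs - 1) True"
proof (induction xs rule: catr.induct)
  case (3 a b r)
  have "last (b # r) \<in> set (b # r)" by (rule last_in_set) simp
  then have "last (b # r) \<noteq> a" using 3 by auto
  then show ?case using 3 by auto
qed auto

definition Tm :: "nat \<Rightarrow> nat \<Rightarrow> btree" where
  "Tm m n = Node (catr [1..<m+1]) (catr [m+1..<n+1])"

lemma Tm_ll: "1 \<le> m \<Longrightarrow> m < n \<Longrightarrow> leaf_list (Tm m n) = [1..<n+1]"
proof -
  assume a: "1 \<le> m" "m < n"
  have "[1..<n+1] = [1..<m+1] @ [m+1..<m+1+(n-m)]" using upt_add_eq_append[of 1 "m+1" "n-m"] a by simp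
  then show ?thesis using a by (simp add: Tm_def ll_catr)
qed

lemma Tm_RB: "1 \<le> m \<Longrightarrow> m < n \<Longrightarrow> Tm m n \<in> RB n"
  unfolding RB_def using Tm_ll by auto

lemma Tm_lp_m: "1 \<le> m \<Longrightarrow> m < n \<Longrightarrow> lp (Tm m n) m = False # replicate (m - 1) True"
proof -
  assume a: "1 \<le> m" "m < n"
  have "lp (catr [1..<m+1]) (last [1..<m+1]) = replicate (length [1..<m+1] - 1) True"
    by (rule lp_catr_last) (use a in auto)
  then show ?thesis using a by (simp add: Tm_def ll_catr)
qed

lemma Tm_lp_1: "2 \<le> m \<Longrightarrow> m < n \<Longrightarrow> lp (Tm m n) 1 = [False, False]"
proof -
  assume a: "2 \<le> m" "m < n"
  have e1: "[1..<m+1] = 1 # [Suc 1..<m+1]" by (rule upt_conv_Cons) (use a in simp)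
  have e2: "[Suc 1..<m+1] = Suc 1 # [Suc (Suc 1)..<m+1]" by (rule upt_conv_Cons) (use a in simp)
  show ?thesis unfolding Tm_def e1 e2 by (simp add: ll_catr)
qed

lemma Tm_ndesc: "1 \<le> m \<Longrightarrow> m < n \<Longrightarrow> ndesc (Tm m n) [False] = m"
  using ndesc_len[of "Tm m n" "[False]"] Tm_ll[of m n] by (simp add: Tm_def ll_catr)

lemma lp_ne: "t \<in> RB n \<Longrightarrow> 2 \<le> n \<Longrightarrow> lp t i \<noteq> []"
  using RB_len[of t n] by (cases t) auto

lemma take1_path:
  assumes "t \<in> RB n" "2 \<le> n" "i \<in> {1..n}"
  shows "take 1 (lp t i) \<in> path_edges t i"
proof -
  have "1 \<le> length (lp t i)" using lp_ne[OF assms(1,2)] by (cases "lp t i") auto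
  then show ?thesis
    using path_edges_eq[OF RB_distinct[OF assms(1)] RB_leaf[OF assms(1,3)]] by auto
qed

lemma lower:
  fixes c :: "bool list \<Rightarrow> real"
  assumes t: "t \<in> RB n" and n: "2 \<le> n" and i: "i \<in> {1..n}" and L: "L > 0"
    and y: "y < c (take 1 (lp t i)) * (if mc then L / 2 else L)"
  shows "\<exists>l. admissible t L l \<and> (mc \<longrightarrow> MC t l) \<and> y < (\<Sum>e\<in>path_edges t i. l e * c e)"
proof (cases mc)
  case True
  then show ?thesis using constr_mc[OF t n i L, of y c] y by auto
next
  case False
  obtain l where "\<forall>e\<in>edges t. l e > 0" "(\<Sum>e\<in>edges t. l e) = L" "y < (\<Sum>e\<in>path_edges t i. l e * c e)"
    using constr_nonmc[OF finite_edges path_sub_edges take1_path[OF t n i] L, of y c] y False by auto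
  then show ?thesis using False unfolding admissible_def by auto
qed

lemma kdist_Tm:
  assumes "1 \<le> m" "m < n" "i \<in> {1..n}"
  shows "kdist (Tm m n) [False] i = length (lp (Tm m n) i) - 1"
proof -
  have "i \<in> set (leaf_list (Tm m n))" using Tm_ll[OF assms(1,2)] assms(3) by auto
  moreover have "distinct (leaf_list (Tm m n))" using Tm_ll[OF assms(1,2)] by simp
  ultimately show ?thesis unfolding kdist_def by (simp add: leafpos_eq)
qed

definition mm :: "nat \<Rightarrow> nat" where
  "mm n = (if n \<le> 3 then 1 else if n = 4 then 3 else if n = 5 then 4 else 5)"

lemma mm_lambda: "2 \<le> n \<Longrightarrow> 1 / real (mm n) - 1 / 2 ^ (mm n - 1) = lambda n"
  unfolding mm_def lambda_def by auto

lemma part_FP: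
  assumes L: "L > 0" and n: "2 \<le> n"
  shows "Delta_FP_ES mc n L = lambda n * (if mc then L / 2 else L)"
  unfolding Delta_FP_ES_def
proof (rule sup_char)
  have lam0: "lambda n \<ge> 0" unfolding lambda_def by auto
  fix x assume "x \<in> {FP t l i - ES t l i |t l i. t \<in> RB n \<and> i \<in> {1..n} \<and> admissible t L l \<and> (mc \<longrightarrow> MC t l)}"
  then obtain t l i where tli: "x = FP t l i - ES t l i" "t \<in> RB n" "i \<in> {1..n}" "admissible t L l" "mc \<longrightarrow> MC t l"
    by blast
  have d: "distinct (leaf_list t)" and ii: "i \<in> set (leaf_list t)" using tli RB_distinct RB_leaf by auto
  have "x \<le> lambda n * root_leaf_dist t l i"
    unfolding tli(1) FP_ES_eq
  proof (rule value_bound[OF tli(4)])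
    fix e assume e: "e \<in> path_edges t i"
    show "1 / real (ndesc t e) - 1 / 2 ^ kdist t e i \<le> lambda n"
      using path_coeff[OF d ii e] RB_len[OF tli(2)] by (intro coeff_FP) auto
  qed
  also have "\<dots> \<le> lambda n * (if mc then L / 2 else L)"
    using dist_bound[OF tli(2) n tli(3,4,5)] lam0 by (intro mult_left_mono) auto
  finally show "x \<le> lambda n * (if mc then L / 2 else L)" .
next
  fix y assume y: "y < lambda n * (if mc then L / 2 else L)"
  let ?m = "mm n"
  let ?t = "Tm ?m n"
  have m: "1 \<le> ?m" "?m < n" using n unfolding mm_def by auto
  have t: "?t \<in> RB n" using Tm_RB[OF m] .
  have i: "?m \<in> {1..n}" using m by auto
  define c where "c = (\<lambda>e. 1 / real (ndesc ?t e) - 1 / 2 ^ kdist ?t e ?m)"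
  have tk: "take 1 (lp ?t ?m) = [False]" using Tm_lp_m[OF m] by simp
  have "c [False] = lambda n"
    unfolding c_def using Tm_ndesc[OF m] kdist_Tm[OF m i] Tm_lp_m[OF m] mm_lambda[OF n] by simp
  then obtain l where l: "admissible ?t L l" "mc \<longrightarrow> MC ?t l" "y < (\<Sum>e\<in>path_edges ?t ?m. l e * c e)"
    using lower[OF t n i L, of y c mc] y tk by auto
  have "FP ?t l ?m - ES ?t l ?m = (\<Sum>e\<in>path_edges ?t ?m. l e * c e)"
    unfolding FP_ES_eq c_def ..
  then show "\<exists>x\<in>{FP t l i - ES t l i |t l i. t \<in> RB n \<and> i \<in> {1..n} \<and> admissible t L l \<and> (mc \<longrightarrow> MC t l)}. y < x"
    using l t i by force
qed

lemma part_ES: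
  assumes L: "L > 0" and n: "3 \<le> n"
  shows "Delta_ES_FP mc n L = (1/2 - 1 / real (n - 1)) * (if mc then L / 2 else L)"
  unfolding Delta_ES_FP_def
proof (rule sup_char)
  have lam0: "1/2 - 1 / real (n - 1) \<ge> 0" using n by (simp add: frac_le)
  fix x assume "x \<in> {ES t l i - FP t l i |t l i. t \<in> RB n \<and> i \<in> {1..n} \<and> admissible t L l \<and> (mc \<longrightarrow> MC t l)}"
  then obtain t l i where tli: "x = ES t l i - FP t l i" "t \<in> RB n" "i \<in> {1..n}" "admissible t L l" "mc \<longrightarrow> MC t l"
    by blast
  have d: "distinct (leaf_list t)" and ii: "i \<in> set (leaf_list t)" using tli RB_distinct RB_leaf by auto
  have "x \<le> (1/2 - 1 / real (n - 1)) * root_leaf_dist t l i"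
    unfolding tli(1) ES_FP_eq
  proof (rule value_bound[OF tli(4)])
    fix e assume e: "e \<in> path_edges t i"
    show "1 / 2 ^ kdist t e i - 1 / real (ndesc t e) \<le> 1/2 - 1 / real (n - 1)"
      using path_coeff[OF d ii e] RB_len[OF tli(2)] n by (intro coeff_ES) auto
  qed
  also have "\<dots> \<le> (1/2 - 1 / real (n - 1)) * (if mc then L / 2 else L)"
    using dist_bound[OF tli(2) _ tli(3,4,5)] lam0 n by (intro mult_left_mono) auto
  finally show "x \<le> (1/2 - 1 / real (n - 1)) * (if mc then L / 2 else L)" .
next
  fix y assume y: "y < (1/2 - 1 / real (n - 1)) * (if mc then L / 2 else L)"
  let ?m = "n - 1"
  let ?t = "Tm ?m n"
  have n2: "2 \<le> n" using n by simp
  have m: "1 \<le> ?m" "?m < n" using n by auto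
  have t: "?t \<in> RB n" using Tm_RB[OF m] .
  have i: "1 \<in> {1..n}" using m by auto
  define c where "c = (\<lambda>e. 1 / 2 ^ kdist ?t e 1 - 1 / real (ndesc ?t e))"
  have lp1: "lp ?t 1 = [False, False]" using Tm_lp_1[of ?m n] n by simp
  have tk: "take 1 (lp ?t 1) = [False]" using lp1 by simp
  have "c [False] = 1/2 - 1 / real (n - 1)"
    unfolding c_def using Tm_ndesc[OF m] kdist_Tm[OF m i] lp1 by simp
  then obtain l where l: "admissible ?t L l" "mc \<longrightarrow> MC ?t l" "y < (\<Sum>e\<in>path_edges ?t 1. l e * c e)"
    using lower[OF t n2 i L, of y c mc] y tk by auto
  have "ES ?t l 1 - FP ?t l 1 = (\<Sum>e\<in>path_edges ?t 1. l e * c e)"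
    unfolding ES_FP_eq c_def ..
  then show "\<exists>x\<in>{ES t l i - FP t l i |t l i. t \<in> RB n \<and> i \<in> {1..n} \<and> admissible t L l \<and> (mc \<longrightarrow> MC t l)}. y < x"
    using l t i by force
qed

theorem theorem3:
  fixes L :: real and n :: nat
  assumes "L > 0"
  shows "(n \<ge> 2 \<longrightarrow> Delta_FP_ES False n L = lambda n * L)
       \<and> (n \<ge> 3 \<longrightarrow> Delta_ES_FP False n L = (1/2 - 1 / real (n - 1)) * L)
       \<and> (n \<ge> 2 \<longrightarrow> Delta_FP_ES True n L = lambda n * L / 2)
       \<and> (n \<ge> 3 \<longrightarrow> Delta_ES_FP True n L = (1/2 - 1 / real (n - 1)) * L / 2)"
  using part_FP[OF assms, of n False] part_FP[OF assms, of n True]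
    part_ES[OF assms, of n False] part_ES[OF assms, of n True] by auto

end
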